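(* Let $\Sigma_n=\{x\in\mathbb R^n:x_i\ge0,\ \sum_ix_i\le1\}$, $\phi(x)=\big(\sqrt{1-\sum_{i=1}^nx_i},\sqrt{x_1},\dots,\sqrt{x_n}\big)\in\mathbb R^{n+1}$, $d_{\Sigma_n}(x,y)=2\arccos(\phi(x)\cdot\phi(y))$ and $f(x,y)=\cos(d_{\Sigma_n}(x,y)/2)=\phi(x)\cdot\phi(y)$. Then for each fixed $y\in\Sigma_n$ the function $x\mapsto f(x,y)$ is concave on $\Sigma_n$, and for each fixed $x$ the function $y\mapsto f(x,y)$ is concave on $\Sigma_n$. Consequently, for every convex polytope $\mathcal P\subset\Sigma_n$, its diameter with respect to $d_{\Sigma_n}$ equals $\max\{d_{\Sigma_n}(u,v):\ u,v\text{ vertices of }\mathcal P\}$.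
   Context: $\cdot$ denotes the Euclidean inner product in $\mathbb R^{n+1}$; $d_{\Sigma_n}$ is the Baran distance of the simplex $\Sigma_n$. *)

theory Defs
  imports "HOL-Analysis.Analysis"
begin

definition simplexS :: "(real ^ 'n) set" where
  "simplexS = {x. (\<forall>i. 0 \<le> x $ i) \<and> (\<Sum>i\<in>UNIV. x $ i) \<le> 1}"

text \<open>phi : R^n -> R^(n+1); the extra coordinate is indexed by None.\<close>
definition phiS :: "real ^ 'n \<Rightarrow> real ^ ('n option)" where
  "phiS x = (\<chi> j. case j of None \<Rightarrow> sqrt (1 - (\<Sum>i\<in>UNIV. x $ i))
                           | Some i \<Rightarrow> sqrt (x $ i))"

definition baranD :: "real ^ 'n \<Rightarrow> real ^ 'n \<Rightarrow> real" where
  "baranD x y = 2 * arccos (phiS x \<bullet> phiS y)"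

definition fS :: "real ^ 'n \<Rightarrow> real ^ 'n \<Rightarrow> real" where
  "fS x y = phiS x \<bullet> phiS y"

definition baran_diameter :: "(real ^ 'n) set \<Rightarrow> real" where
  "baran_diameter P = (SUP p\<in>P \<times> P. baranD (fst p) (snd p))"

end

theory Submission
  imports Defs
begin

lemma sqrt_concave_aux:
  fixes a b u v :: real
  assumes "a \<ge> 0" "b \<ge> 0" "u \<ge> 0" "v \<ge> 0" "u + v = 1"
  shows "u * sqrt a + v * sqrt b \<le> sqrt (u * a + v * b)"
proof -
  have "(u * sqrt a + v * sqrt b)^2 = u^2 * a + v^2 * b + 2 * u * v * (sqrt a * sqrt b)"
    using assms by (simp add: power2_eq_square algebra_simps)
  also have "2 * (sqrt a * sqrt b) \<le> a + b"
  proof -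
    have "0 \<le> (sqrt a - sqrt b)^2" by simp
    also have "\<dots> = a + b - 2 * (sqrt a * sqrt b)"
      using assms by (simp add: power2_eq_square algebra_simps)
    finally show ?thesis by simp
  qed
  hence "u * v * (2 * (sqrt a * sqrt b)) \<le> u * v * (a+b)"
    using assms by (intro mult_left_mono) auto
  hence "u^2 * a + v^2 * b + 2 * u * v * (sqrt a * sqrt b) \<le> u^2 * a + v^2 * b + u * v * (a + b)"
    by (simp add: algebra_simps)
  also have "\<dots> = u * a + v * b"
  proof -
    have "u^2 * a + v^2 * b + u * v * (a + b) = (u * a + v * b) * (u + v)"
      by (simp add: power2_eq_square algebra_simps)
    thus ?thesis using assms(5) by simp
  qed
  finally have "(u * sqrt a + v * sqrt b)^2 \<le> u * a + v * b" .
  hence "sqrt ((u * sqrt a + v * sqrt b)^2) \<le> sqrt (u * a+v * b)"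
    using real_sqrt_le_mono by blast
  moreover have "u * sqrt a + v * sqrt b \<ge> 0" using assms by simp
  ultimately show ?thesis by simp
qed

lemma convex_simplexS: "convex (simplexS :: (real^'n) set)"
  unfolding convex_def
proof (intro ballI allI impI)
  fix x y :: "real^'n" and u v :: real
  assume hx: "x \<in> simplexS" and hy: "y \<in> simplexS" and h: "0 \<le> u" "0 \<le> v" "u + v = 1"
  have x0: "\<forall>i. 0 \<le> x $ i" "sum (($) x) UNIV \<le> 1" using hx by (auto simp: simplexS_def)
  have y0: "\<forall>i. 0 \<le> y $ i" "sum (($) y) UNIV \<le> 1" using hy by (auto simp: simplexS_def)
  have "(\<Sum>i\<in>UNIV. (u *\<^sub>R x + v *\<^sub>R y) $ i) = u * sum (($) x) UNIV + v * sum (($) y) UNIV"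
    by (simp add: sum.distrib sum_distrib_left)
  also have "\<dots> \<le> u * 1 + v * 1" using h x0 y0 by (intro add_mono mult_left_mono) auto
  finally have s: "(\<Sum>i\<in>UNIV. (u *\<^sub>R x + v *\<^sub>R y) $ i) \<le> 1" using h by simp
  have "\<forall>i. 0 \<le> (u *\<^sub>R x + v *\<^sub>R y) $ i" using h x0 y0 by simp
  with s show "u *\<^sub>R x + v *\<^sub>R y \<in> simplexS" unfolding simplexS_def by simp
qed

lemma phiS_concave_comp:
  fixes x z :: "real^'n"
  assumes x: "x \<in> simplexS" and z: "z \<in> simplexS" and "u \<ge> 0" "v \<ge> 0" "u + v = 1"
  shows "u * phiS x $ j + v * phiS z $ j \<le> phiS (u *\<^sub>R x + v *\<^sub>R z) $ j"
proof -
  have x0: "\<forall>i. 0 \<le> x $ i" "sum (($) x) UNIV \<le> 1" using x by (auto simp: simplexS_def)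
  have z0: "\<forall>i. 0 \<le> z $ i" "sum (($) z) UNIV \<le> 1" using z by (auto simp: simplexS_def)
  show ?thesis
  proof (cases j)
    case None
    have e: "1 - (\<Sum>i\<in>UNIV. (u *\<^sub>R x + v *\<^sub>R z) $ i) = u * (1 - sum (($) x) UNIV) + v * (1 - sum (($) z) UNIV)"
      using assms(5) by (simp add: sum.distrib sum_distrib_left algebra_simps)
    have "u * sqrt (1 - sum (($) x) UNIV) + v * sqrt (1 - sum (($) z) UNIV)
          \<le> sqrt (u * (1 - sum (($) x) UNIV) + v * (1 - sum (($) z) UNIV))"
      using x0 z0 assms(3-5) by (intro sqrt_concave_aux) auto
    then show ?thesis using None unfolding phiS_def e[symmetric] by simp
  next
    case (Some i)
    have "u * sqrt (x $ i) + v * sqrt (z $ i) \<le> sqrt (u * x $ i + v * z $ i)"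
      using x0 z0 assms(3-5) by (intro sqrt_concave_aux) auto
    then show ?thesis using Some unfolding phiS_def by simp
  qed
qed

lemma phiS_nonneg: "x \<in> simplexS \<Longrightarrow> phiS x $ j \<ge> 0"
  unfolding phiS_def simplexS_def by (cases j) auto

lemma fS_concave1:
  fixes y :: "real^'n"
  assumes y: "y \<in> simplexS"
  shows "concave_on simplexS (\<lambda>x. fS x y)"
  unfolding concave_on_iff
proof (intro conjI convex_simplexS ballI allI impI)
  fix x z :: "real^'n" and u v :: real
  assume x: "x \<in> simplexS" and z: "z \<in> simplexS" and uv: "0 \<le> u" "0 \<le> v" "u + v = 1"
  have "u * fS x y + v * fS z y = (\<Sum>j\<in>UNIV. (u * phiS x $ j + v * phiS z $ j) * phiS y $ j)"
    unfolding fS_def inner_vec_def by (simp add: sum_distrib_left sum.distrib algebra_simps)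
  also have "\<dots> \<le> (\<Sum>j\<in>UNIV. phiS (u *\<^sub>R x + v *\<^sub>R z) $ j * phiS y $ j)"
    by (intro sum_mono mult_right_mono phiS_concave_comp x z uv phiS_nonneg y)
  also have "\<dots> = fS (u *\<^sub>R x + v *\<^sub>R z) y"
    unfolding fS_def inner_vec_def by simp
  finally show "u * fS x y + v * fS z y \<le> fS (u *\<^sub>R x + v *\<^sub>R z) y" .
qed

lemma fS_sym: "fS x y = fS y x"
  unfolding fS_def by (simp add: inner_commute)

lemma sum_option_UNIV: "(\<Sum>j\<in>(UNIV::'a::finite option set). g j) = g None + (\<Sum>i\<in>UNIV. g (Some i))"
proof -
  have "(\<Sum>j\<in>(UNIV::'a option set). g j) = (\<Sum>j\<in>insert None (Some ` UNIV). g j)"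
    by (simp only: UNIV_option_conv)
  also have "\<dots> = g None + (\<Sum>j\<in>Some ` UNIV. g j)"
    by (rule sum.insert) auto
  also have "(\<Sum>j\<in>Some ` UNIV. g j) = (\<Sum>i\<in>UNIV. g (Some i))"
    by (simp add: sum.reindex)
  finally show ?thesis .
qed

lemma phiS_norm: assumes "x \<in> simplexS" shows "phiS x \<bullet> phiS x = 1"
proof -
  have x0: "\<forall>i. 0 \<le> x $ i" "sum (($) x) UNIV \<le> 1" using assms by (auto simp: simplexS_def)
  have "phiS x \<bullet> phiS x = (\<Sum>j\<in>UNIV. phiS x $ j * phiS x $ j)" by (simp add: inner_vec_def)
  also have "\<dots> = (1 - sum (($) x) UNIV) + (\<Sum>i\<in>UNIV. x $ i)"
    using x0 by (simp add: sum_option_UNIV phiS_def)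
  finally show ?thesis by simp
qed

lemma fS_range: assumes "x \<in> simplexS" "y \<in> simplexS" shows "0 \<le> fS x y" "fS x y \<le> 1"
proof -
  show "0 \<le> fS x y" unfolding fS_def inner_vec_def
    using assms by (simp add: sum_nonneg mult_nonneg_nonneg phiS_nonneg)
  have "fS x y \<le> norm (phiS x) * norm (phiS y)" unfolding fS_def by (rule norm_cauchy_schwarz)
  also have "\<dots> = 1" using assms by (simp add: norm_eq_sqrt_inner phiS_norm)
  finally show "fS x y \<le> 1" .
qed

lemma fS_concave2:
  assumes "x \<in> simplexS"
  shows "concave_on simplexS (\<lambda>y. fS x y)"
  using fS_concave1[OF assms] by (simp add: fS_sym)

lemma concave_hull_min:
  fixes g :: "'a::real_vector \<Rightarrow> real"
  assumes "concave_on S g" "finite E" "E \<noteq> {}" "convex hull E \<subseteq> S" "p \<in> convex hull E"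
  shows "\<exists>b\<in>E. g b \<le> g p"
proof -
  obtain b where b: "b \<in> E" "\<forall>e\<in>E. g b \<le> g e"
  proof -
    have "Min (g ` E) \<in> g ` E" using assms(2,3) by simp
    then obtain b where "b \<in> E" "g b = Min (g ` E)" by auto
    moreover have "\<forall>e\<in>E. Min (g ` E) \<le> g e" using assms(2) by simp
    ultimately show ?thesis using that by auto
  qed
  have "convex_on (convex hull E) (\<lambda>x. - g x)"
    using assms(1,4) unfolding concave_on_def by (rule convex_on_subset[OF _ _ convex_convex_hull])
  then have "\<forall>x\<in>convex hull E. - g x \<le> - g b"
    using b by (intro convex_on_convex_hull_bound) auto
  then show ?thesis using b assms(5) by force
qed

theorem mainTheorem15:
  shows "(\<forall>y\<in>(simplexS :: (real ^ 'n) set). concave_on simplexS (\<lambda>x. fS x y))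
       \<and> (\<forall>x\<in>(simplexS :: (real ^ 'n) set). concave_on simplexS (\<lambda>y. fS x y))
       \<and> (\<forall>P :: (real ^ 'n) set. polytope P \<and> P \<noteq> {} \<and> P \<subseteq> simplexS \<longrightarrow>
             baran_diameter P =
               Max {baranD u v | u v. u extreme_point_of P \<and> v extreme_point_of P})"
proof (intro conjI ballI allI impI)
  fix y :: "real^'n" assume "y \<in> simplexS" thus "concave_on simplexS (\<lambda>x. fS x y)" by (rule fS_concave1)
next
  fix x :: "real^'n" assume "x \<in> simplexS" thus "concave_on simplexS (\<lambda>y. fS x y)" by (rule fS_concave2)
next
  fix P :: "(real^'n) set"
  assume a: "polytope P \<and> P \<noteq> {} \<and> P \<subseteq> simplexS"
  then obtain V where V: "finite V" "P = convex hull V" unfolding polytope_def by auto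
  define E where "E = {x. x extreme_point_of P}"
  have EV: "E \<subseteq> V" unfolding E_def V(2) by (rule extreme_points_of_convex_hull)
  have fE: "finite E" using EV V(1) finite_subset by blast
  have PE: "P = convex hull E" unfolding E_def V(2) using Krein_Milman_polytope[OF V(1)] .
  have Ene: "E \<noteq> {}" using a PE by auto
  have EP: "E \<subseteq> P" unfolding E_def by (auto simp: extreme_point_of_def)
  have PS: "P \<subseteq> simplexS" using a by auto
  have key: "\<exists>a\<in>E. \<exists>b\<in>E. fS a b \<le> fS u v" if u: "u \<in> P" and v: "v \<in> P" for u v
  proof -
    obtain b where b: "b \<in> E" "fS u b \<le> fS u v"
      using concave_hull_min[OF fS_concave2[of u] fE Ene] u v PS PE by auto
    obtain c where c: "c \<in> E" "fS c b \<le> fS u b"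
    proof -
      have "b \<in> simplexS" using b EP PS by blast
      thus ?thesis using concave_hull_min[OF fS_concave1[of b] fE Ene] u PS PE that by auto
    qed
    have "fS c b \<le> fS u v" using b c by linarith
    thus ?thesis using b c by blast
  qed
  define S where "S = {baranD u v | u v. u extreme_point_of P \<and> v extreme_point_of P}"
  have S_eq: "S = (\<lambda>p. baranD (fst p) (snd p)) ` (E \<times> E)"
    unfolding S_def E_def by force
  have fS': "finite S" unfolding S_eq using fE by simp
  have Sne: "S \<noteq> {}" unfolding S_eq using Ene by simp
  have MS: "Max S \<in> S" using fS' Sne by simp
  have ub: "baranD u v \<le> Max S" if uvP: "u \<in> P" "v \<in> P" for u v
  proof -
    obtain c b where cb: "c \<in> E" "b \<in> E" "fS c b \<le> fS u v" using key[OF uvP] by auto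
    have r1: "0 \<le> fS c b" using fS_range cb EP PS by blast
    have r2: "fS u v \<le> 1" using fS_range uvP PS by blast
    have "baranD u v \<le> baranD c b"
      unfolding baranD_def fS_def[symmetric] using arccos_le_arccos[of "fS c b" "fS u v"] r1 r2 cb by simp
    also have "\<dots> \<le> Max S" using fS' cb unfolding S_eq by (intro Max_ge) (auto intro!: image_eqI[where x="(c,b)"])
    finally show ?thesis .
  qed
  have "baran_diameter P = Max S"
    unfolding baran_diameter_def
  proof (rule cSup_eq_maximum)
    show "Max S \<in> (\<lambda>p. baranD (fst p) (snd p)) ` (P \<times> P)"
      using MS EP unfolding S_eq by auto
    show "\<And>z. z \<in> (\<lambda>p. baranD (fst p) (snd p)) ` (P \<times> P) \<Longrightarrow> z \<le> Max S"
      using ub by auto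
  qed
  thus "baran_diameter P = Max {baranD u v | u v. u extreme_point_of P \<and> v extreme_point_of P}"
    unfolding S_def .
qed

end
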